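(* There exists a deterministic distributed algorithm with advice (an oracle together with an algorithm) that solves Selection in every anonymous port-labeled graph $G$ whose Selection index $\psi_S(G)$ is finite, using exactly $\psi_S(G)$ communication rounds and advice of size $O((\Delta-1)^{\psi_S(G)}\log \Delta)$, where $\Delta$ is the maximum degree of $G$.
   Context: Networks are simple undirected connected graphs without node identifiers; at each node of degree $d$ incident edges have distinct local port numbers $0,\dots,d-1$. Communication is in the synchronous LOCAL model (all nodes start together; each round every node exchanges arbitrary messages with all neighbors); initially a node knows only its degree. In the advice model, an oracle knowing the whole port-labeled graph $G$ gives the same binary string to all nodes at the start; its length is the size of advice. Selection: exactly one node outputs "leader" and all others output "non-leader". The Selection index $\psi_S(G)$ is the minimum number of rounds in which Selection can be solved on $G$ by a deterministic algorithm when every node knows the complete map of $G$ (an isomorphic copy with all port numbers); it is finite iff the views of all nodes are distinct, where the view of $v$ is the infinite tree of all finite paths from $v$ coded by their port-number sequences. *)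

theory Defs
  imports Complex_Main
begin

text \<open>Nodes are 0,...,nv G - 1 (the names are invisible to algorithms).
  deg G v is the degree of v, and nbr G v p is the neighbour reached from v
  through its local port p (for p < deg G v).\<close>

record pgraph =
  nv  :: nat
  deg :: "nat \<Rightarrow> nat"
  nbr :: "nat \<Rightarrow> nat \<Rightarrow> nat"

definition pg_edges :: "pgraph \<Rightarrow> (nat \<times> nat) set" where
  "pg_edges G = {(v, nbr G v p) | v p. v < nv G \<and> p < deg G v}"

definition wf_pgraph :: "pgraph \<Rightarrow> bool" where
  "wf_pgraph G \<longleftrightarrow>
     nv G \<ge> 1
   \<and> (\<forall>v < nv G. \<forall>p < deg G v. nbr G v p < nv G \<and> nbr G v p \<noteq> v)
   \<and> (\<forall>v < nv G. inj_on (nbr G v) {..<deg G v})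
   \<and> (\<forall>v < nv G. \<forall>p < deg G v. \<exists>q < deg G (nbr G v p). nbr G (nbr G v p) q = v)
   \<and> (\<forall>u < nv G. \<forall>w < nv G. (u, w) \<in> (pg_edges G)\<^sup>*)"

definition rport :: "pgraph \<Rightarrow> nat \<Rightarrow> nat \<Rightarrow> nat" where
  "rport G v p = (THE q. q < deg G (nbr G v p) \<and> nbr G (nbr G v p) q = v)"

definition maxdeg :: "pgraph \<Rightarrow> nat" where
  "maxdeg G = Max (deg G ` {..<nv G})"

text \<open>Local states and messages are natural numbers (w.l.o.g., by encoding;
  all relevant information, e.g. truncated views, is countable).
  a_init advice d: initial state of a node of degree d that received the advice;
  a_send s p: message sent through port p in state s;
  a_upd s m: new state, m p being the message received through port p;
  a_out s: output in state s (None = not yet decided, Some True = leader,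
  Some False = non-leader).\<close>

record alg =
  a_init :: "bool list \<Rightarrow> nat \<Rightarrow> nat"
  a_send :: "nat \<Rightarrow> nat \<Rightarrow> nat"
  a_upd  :: "nat \<Rightarrow> (nat \<Rightarrow> nat) \<Rightarrow> nat"
  a_out  :: "nat \<Rightarrow> bool option"

primrec exec :: "pgraph \<Rightarrow> alg \<Rightarrow> bool list \<Rightarrow> nat \<Rightarrow> nat \<Rightarrow> nat" where
  "exec G A a 0 v = a_init A a (deg G v)"
| "exec G A a (Suc t) v =
     a_upd A (exec G A a t v)
       (\<lambda>p. if p < deg G v then a_send A (exec G A a t (nbr G v p)) (rport G v p) else 0)"

definition solves_sel_in :: "pgraph \<Rightarrow> alg \<Rightarrow> bool list \<Rightarrow> nat \<Rightarrow> bool" where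
  "solves_sel_in G A a T \<longleftrightarrow>
     (\<forall>v < nv G. a_out A (exec G A a T v) \<noteq> None)
   \<and> (\<forall>v < nv G. \<forall>t s. t \<le> s \<longrightarrow> a_out A (exec G A a t v) \<noteq> None
          \<longrightarrow> a_out A (exec G A a s v) = a_out A (exec G A a t v))
   \<and> (\<exists>!v. v < nv G \<and> a_out A (exec G A a T v) = Some True)"

text \<open>A algorithm dedicated to G (i.e. whose nodes know the map of G) solves
  Selection on G in T rounds.\<close>
definition sel_solvable :: "pgraph \<Rightarrow> nat \<Rightarrow> bool" where
  "sel_solvable G T \<longleftrightarrow> (\<exists>A. solves_sel_in G A [] T)"

text \<open>Selection index (meaningful when finite, i.e. when some T works).\<close>
definition sel_index :: "pgraph \<Rightarrow> nat" where
  "sel_index G = (LEAST T. sel_solvable G T)"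

end

theory Submission
  imports Defs "HOL-Library.Countable"
begin

datatype tr = Tr nat nat "(nat \<times> tr) list"
instance tr :: countable by countable_datatype

primrec W :: "pgraph \<Rightarrow> nat \<Rightarrow> nat \<Rightarrow> nat \<Rightarrow> tr" where
  "W G 0 u r = Tr (deg G u) r []"
| "W G (Suc t) u r = Tr (deg G u) r
     (map (\<lambda>q. (rport G u q, W G t (nbr G u q) (rport G u q))) (filter (\<lambda>q. q \<noteq> r) [0..<deg G u]))"

fun restr :: "nat \<Rightarrow> tr \<Rightarrow> tr" where
  "restr r (Tr d r0 l) = Tr d r (map (\<lambda>q. l ! q) (filter (\<lambda>q. q \<noteq> r) [0..<length l]))"

lemma filter_all: "filter (\<lambda>q. q \<noteq> d) [0..<d] = [0..<d]"
  by (induct d) auto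

lemma restr_W: "restr r (W G t u (deg G u)) = W G t u r"
  by (cases t) (auto simp: filter_all)

lemma wfD1: "wf_pgraph G \<Longrightarrow> nv G \<ge> 1"
  unfolding wf_pgraph_def by (elim conjE) assumption
lemma wfD2: assumes "wf_pgraph G" "v < nv G" "p < deg G v" shows "nbr G v p < nv G \<and> nbr G v p \<noteq> v"
proof -
  have "\<forall>v < nv G. \<forall>p < deg G v. nbr G v p < nv G \<and> nbr G v p \<noteq> v"
    using assms(1) unfolding wf_pgraph_def by (elim conjE) assumption
  then show ?thesis using assms(2,3) by blast
qed
lemma wfD3: assumes "wf_pgraph G" "v < nv G" shows "inj_on (nbr G v) {..<deg G v}"
proof -
  have "\<forall>v < nv G. inj_on (nbr G v) {..<deg G v}"
    using assms(1) unfolding wf_pgraph_def by (elim conjE) assumption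
  then show ?thesis using assms(2) by simp
qed
lemma wfD4: assumes "wf_pgraph G" "v < nv G" "p < deg G v" shows "\<exists>q < deg G (nbr G v p). nbr G (nbr G v p) q = v"
proof -
  have "\<forall>v < nv G. \<forall>p < deg G v. \<exists>q < deg G (nbr G v p). nbr G (nbr G v p) q = v"
    using assms(1) unfolding wf_pgraph_def by (elim conjE) assumption
  then show ?thesis using assms(2,3) by blast
qed

lemma rport_props:
  assumes wf: "wf_pgraph G" and v: "v < nv G" and p: "p < deg G v"
  shows "rport G v p < deg G (nbr G v p) \<and> nbr G (nbr G v p) (rport G v p) = v
         \<and> rport G (nbr G v p) (rport G v p) = p"
proof -
  let ?w = "nbr G v p"
  have w: "?w < nv G" using wfD2[OF wf v p] by simp
  obtain q where q: "q < deg G ?w" "nbr G ?w q = v" using wfD4[OF wf v p] by blast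
  have injw: "inj_on (nbr G ?w) {..<deg G ?w}" using wfD3[OF wf w] .
  have injv: "inj_on (nbr G v) {..<deg G v}" using wfD3[OF wf v] .
  have ex1: "\<exists>!q. q < deg G ?w \<and> nbr G ?w q = v"
  proof (rule ex1I[of _ q])
    show "q < deg G ?w \<and> nbr G ?w q = v" using q by simp
    fix y assume "y < deg G ?w \<and> nbr G ?w y = v"
    then show "y = q" using q inj_onD[OF injw, of y q] by simp
  qed
  then have r: "rport G v p < deg G ?w \<and> nbr G ?w (rport G v p) = v"
    unfolding rport_def by (rule theI')
  have "\<exists>!p'. p' < deg G v \<and> nbr G v p' = ?w"
  proof (rule ex1I[of _ p])
    show "p < deg G v \<and> nbr G v p = ?w" using p by simp
    fix y assume "y < deg G v \<and> nbr G v y = ?w"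
    then show "y = p" using p inj_onD[OF injv, of y p] by simp
  qed
  then have e: "(THE p'. p' < deg G v \<and> nbr G v p' = ?w) = p"
    by (rule the1_equality) (simp add: p)
  have "rport G ?w (rport G v p) = (THE p'. p' < deg G (nbr G ?w (rport G v p)) \<and> nbr G (nbr G ?w (rport G v p)) p' = ?w)"
    by (rule rport_def)
  also have "\<dots> = (THE p'. p' < deg G v \<and> nbr G v p' = ?w)" using r by (simp only:)
  finally have "rport G ?w (rport G v p) = p" using e by (simp only:)
  then show ?thesis using r by (simp only: simp_thms)
qed

lemma map_eq_pw: "map f xs = map g xs \<Longrightarrow> x \<in> set xs \<Longrightarrow> f x = g x"
  by (simp add: map_eq_conv)

lemma W_Suc_eq:
  assumes "W G (Suc t) u r = W G (Suc t) u' r'"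
  shows "deg G u = deg G u' \<and> r = r' \<and> (\<forall>q. q < deg G u \<and> q \<noteq> r \<longrightarrow>
     rport G u q = rport G u' q \<and> W G t (nbr G u q) (rport G u q) = W G t (nbr G u' q) (rport G u' q))"
proof -
  have d: "deg G u = deg G u'" and rr: "r = r'" using assms by simp_all
  have m: "map (\<lambda>q. (rport G u q, W G t (nbr G u q) (rport G u q))) (filter (\<lambda>q. q \<noteq> r) [0..<deg G u])
     = map (\<lambda>q. (rport G u' q, W G t (nbr G u' q) (rport G u' q))) (filter (\<lambda>q. q \<noteq> r) [0..<deg G u])"
  proof -
    have "map (\<lambda>q. (rport G u q, W G t (nbr G u q) (rport G u q))) (filter (\<lambda>q. q \<noteq> r) [0..<deg G u])
     = map (\<lambda>q. (rport G u' q, W G t (nbr G u' q) (rport G u' q))) (filter (\<lambda>q. q \<noteq> r') [0..<deg G u'])"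
      using assms[unfolded W.simps tr.inject] by (elim conjE) assumption
    then show ?thesis by (simp only: d rr)
  qed
  have "(rport G u q, W G t (nbr G u q) (rport G u q)) = (rport G u' q, W G t (nbr G u' q) (rport G u' q))"
    if "q < deg G u" "q \<noteq> r" for q
  proof -
    have "q \<in> set (filter (\<lambda>q. q \<noteq> r) [0..<deg G u])" using that by simp
    from map_eq_pw[OF m this] show ?thesis by (simp only:)
  qed
  then show ?thesis using d rr by (simp only: prod.inject) blast
qed

lemma W_Suc_intro:
  assumes "deg G u = deg G u'" "r = r'" "\<forall>q. q < deg G u \<and> q \<noteq> r \<longrightarrow>
     rport G u q = rport G u' q \<and> W G t (nbr G u q) (rport G u q) = W G t (nbr G u' q) (rport G u' q)"
  shows "W G (Suc t) u r = W G (Suc t) u' r'"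
proof -
  have "map (\<lambda>q. (rport G u q, W G t (nbr G u q) (rport G u q))) (filter (\<lambda>q. q \<noteq> r) [0..<deg G u])
     = map (\<lambda>q. (rport G u' q, W G t (nbr G u' q) (rport G u' q))) (filter (\<lambda>q. q \<noteq> r) [0..<deg G u])"
  proof (rule map_cong[OF refl])
    fix x assume "x \<in> set (filter (\<lambda>q. q \<noteq> r) [0..<deg G u])"
    then have "x < deg G u \<and> x \<noteq> r" by simp
    then show "(rport G u x, W G t (nbr G u x) (rport G u x)) = (rport G u' x, W G t (nbr G u' x) (rport G u' x))"
      using assms(3) by (simp only: prod.inject) blast
  qed
  then show ?thesis using assms(1,2) by (simp only: W.simps tr.inject)
qed

lemma W_trunc: "W G (Suc t) u r = W G (Suc t) u' r' \<Longrightarrow> W G t u r = W G t u' r'"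
proof (induction t arbitrary: u r u' r')
  case 0
  then show ?case by simp
next
  case (Suc t)
  note E = W_Suc_eq[OF Suc.prems]
  have "\<forall>q. q < deg G u \<and> q \<noteq> r \<longrightarrow>
     rport G u q = rport G u' q \<and> W G t (nbr G u q) (rport G u q) = W G t (nbr G u' q) (rport G u' q)"
    using E Suc.IH by blast
  moreover have "deg G u = deg G u'" "r = r'" using E by simp_all
  ultimately show ?case using W_Suc_intro by metis
qed

lemma W_trunc_le: "s \<le> t \<Longrightarrow> W G t u r = W G t u' r' \<Longrightarrow> W G s u r = W G s u' r'"
proof (induction t arbitrary: s)
  case 0 then show ?case by simp
next
  case (Suc t)
  show ?case
  proof (cases "s = Suc t")
    case True then show ?thesis using Suc.prems(2) by (simp only:)
  next
    case False
    then have "s \<le> t" using Suc.prems(1) by simp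
    moreover have "W G t u r = W G t u' r'" using W_trunc[OF Suc.prems(2)] .
    ultimately show ?thesis using Suc.IH by blast
  qed
qed

lemma W_X: "W G t u (deg G u) = W G t u' (deg G u') \<Longrightarrow> W G t u r = W G t u' r"
  by (metis restr_W)

lemma W_Y:
  assumes "r < deg G w" "W G t w r = W G t w' r'" "rport G w r = rport G w' r'"
    "W G (t-1) (nbr G w r) (rport G w r) = W G (t-1) (nbr G w' r') (rport G w' r')"
  shows "W G t w (deg G w) = W G t w' (deg G w')"
proof (cases t)
  case 0 then show ?thesis using assms by simp
next
  case (Suc s)
  note E = W_Suc_eq[OF assms(2)[unfolded Suc]]
  have d: "deg G w = deg G w'" and rr: "r = r'" using E by simp_all
  have "\<forall>q. q < deg G w \<and> q \<noteq> deg G w \<longrightarrow> rport G w q = rport G w' q \<and> W G s (nbr G w q) (rport G w q) = W G s (nbr G w' q) (rport G w' q)"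
  proof (intro allI impI)
    fix q assume q: "q < deg G w \<and> q \<noteq> deg G w"
    show "rport G w q = rport G w' q \<and> W G s (nbr G w q) (rport G w q) = W G s (nbr G w' q) (rport G w' q)"
    proof (cases "q = r")
      case True
      have "t - 1 = s" using Suc by simp
      then show ?thesis using assms(3,4) True rr by (simp only:)
    next
      case False then show ?thesis using E q by blast
    qed
  qed
  then have "W G (Suc s) w (deg G w) = W G (Suc s) w' (deg G w')"
    by (rule W_Suc_intro[OF d d])
  then show ?thesis by (simp only: Suc)
qed

lemma exec_det:
  assumes wf: "wf_pgraph G"
  shows "u < nv G \<Longrightarrow> u' < nv G \<Longrightarrow> W G t u (deg G u) = W G t u' (deg G u')
    \<Longrightarrow> exec G B a t u = exec G B a t u'"
proof (induction t arbitrary: u u')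
  case 0 then show ?case by simp
next
  case (Suc t)
  from Suc.prems have d: "deg G u = deg G u'" by simp
  have st: "exec G B a t u = exec G B a t u'"
    using Suc W_trunc by blast
  have pw: "\<forall>q < deg G u. rport G u q = rport G u' q \<and> W G t (nbr G u q) (rport G u q) = W G t (nbr G u' q) (rport G u' q)"
    using W_Suc_eq[OF Suc.prems(3)] by (metis less_irrefl)
  have msg: "exec G B a t (nbr G u p) = exec G B a t (nbr G u' p)" if p: "p < deg G u" for p
  proof -
    let ?w = "nbr G u p" and ?w' = "nbr G u' p" and ?r = "rport G u p" and ?r' = "rport G u' p"
    have R: "?r < deg G ?w" "nbr G ?w ?r = u" "rport G ?w ?r = p"
      using rport_props[OF wf Suc.prems(1) p] by auto
    have R': "?r' < deg G ?w'" "nbr G ?w' ?r' = u'" "rport G ?w' ?r' = p"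
      using rport_props[OF wf Suc.prems(2)] p d by auto
    have "W G (t-1) u (deg G u) = W G (t-1) u' (deg G u')"
      using W_trunc_le[OF _ Suc.prems(3)] by simp
    then have "W G (t-1) u p = W G (t-1) u' p" by (rule W_X)
    then have b: "W G (t-1) (nbr G ?w ?r) (rport G ?w ?r) = W G (t-1) (nbr G ?w' ?r') (rport G ?w' ?r')"
      by (simp only: R R')
    have a1: "W G t ?w ?r = W G t ?w' ?r'" using pw p by blast
    have a2: "rport G ?w ?r = rport G ?w' ?r'" using R R' by simp
    have "W G t ?w (deg G ?w) = W G t ?w' (deg G ?w')"
      using W_Y[OF R(1) a1 a2 b] .
    moreover have "?w < nv G" "?w' < nv G" using wfD2[OF wf Suc.prems(1) p] wfD2[OF wf Suc.prems(2)] p d by auto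
    ultimately show ?thesis using Suc.IH by blast
  qed
  have "(\<lambda>p. if p < deg G u then a_send B (exec G B a t (nbr G u p)) (rport G u p) else 0)
      = (\<lambda>p. if p < deg G u' then a_send B (exec G B a t (nbr G u' p)) (rport G u' p) else 0)"
  proof (rule ext)
    fix p show "(if p < deg G u then a_send B (exec G B a t (nbr G u p)) (rport G u p) else 0)
      = (if p < deg G u' then a_send B (exec G B a t (nbr G u' p)) (rport G u' p) else 0)"
    proof (cases "p < deg G u")
      case True
      then have "rport G u p = rport G u' p" using pw by blast
      then show ?thesis using True d msg[OF True] by simp
    next
      case False then show ?thesis using d by simp
    qed
  qed
  then show ?case using st by (simp only: exec.simps)
qed


fun trdeg :: "tr \<Rightarrow> nat" where "trdeg (Tr d r l) = d"
fun trr :: "tr \<Rightarrow> nat" where "trr (Tr d r l) = r"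

lemma trdeg_W: "trdeg (W G t u r) = deg G u" by (cases t) simp_all
lemma trr_W: "trr (W G t u r) = r" by (cases t) simp_all

lemma W_Suc_N: "W G (Suc t) v (deg G v) = Tr (deg G v) (deg G v)
   (map (\<lambda>q. (rport G v q, W G t (nbr G v q) (rport G v q))) [0..<deg G v])"
  by (simp add: filter_all)

fun bits :: "nat \<Rightarrow> bool list" where
  "bits n = (if n = 0 then [] else odd n # bits (n div 2))"

fun nob :: "bool list \<Rightarrow> nat" where
  "nob [] = 0"
| "nob (b # bs) = (if b then 1 else 0) + 2 * nob bs"

lemma nob_bits: "nob (bits n) = n"
proof (induction n rule: bits.induct)
  case (1 n)
  show ?case
  proof (cases "n = 0")
    case True then show ?thesis by simp
  next
    case False
    then have "nob (bits n) = (if odd n then 1 else 0) + 2 * nob (bits (n div 2))" by simp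
    also have "\<dots> = n" using 1 False by simp
    finally show ?thesis .
  qed
qed

type_synonym st = "nat \<times> tr \<times> nat \<times> tr"

fun Wset :: "nat \<Rightarrow> nat \<Rightarrow> tr set" where
  "Wset D 0 = (\<lambda>(d, r). Tr d r []) ` ({..D} \<times> {..D})"
| "Wset D (Suc t) = (\<lambda>((d, r), l). Tr d r l) `
     (({..D} \<times> {..D}) \<times> {l. set l \<subseteq> {..<D} \<times> Wset D t \<and> length l \<le> D - 1})"

fun Nset :: "nat \<Rightarrow> nat \<Rightarrow> tr set" where
  "Nset D 0 = Wset D 0"
| "Nset D (Suc t) = (\<lambda>((d, r), l). Tr d r l) `
     (({..D} \<times> {..D}) \<times> {l. set l \<subseteq> {..<D} \<times> Wset D t \<and> length l \<le> D})"

definition enumN :: "nat \<Rightarrow> nat \<Rightarrow> nat \<Rightarrow> tr" where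
  "enumN D t = (SOME h. bij_betw h {0..<card (Nset D t)} (Nset D t))"

definition dec_adv :: "bool list \<Rightarrow> nat \<times> tr" where
  "dec_adv a = (case prod_decode (nob a) of (D, r) \<Rightarrow>
      (case prod_decode r of (ps, i) \<Rightarrow> (ps, enumN D ps i)))"

definition Alg :: alg where
  "Alg = \<lparr> a_init = (\<lambda>a d. to_nat (fst (dec_adv a), snd (dec_adv a), 0::nat, Tr d d [])),
     a_send = (\<lambda>s p. to_nat (restr p (snd (snd (snd (from_nat s :: st)))))),
     a_upd = (\<lambda>s m. (case (from_nat s :: st) of (ps, tg, c, N) \<Rightarrow>
        if ps \<le> c then s else to_nat (ps, tg, Suc c,
          Tr (trdeg N) (trdeg N) (map (\<lambda>q. (trr (from_nat (m q)), from_nat (m q))) [0..<trdeg N])))),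
     a_out = (\<lambda>s. (case (from_nat s :: st) of (ps, tg, c, N) \<Rightarrow>
        if ps \<le> c then Some (N = tg) else None)) \<rparr>"

lemma Alg_run:
  assumes "dec_adv a = (ps, tg)"
  shows "t \<le> ps \<Longrightarrow> exec G Alg a t v = to_nat (ps, tg, t, W G t v (deg G v))"
proof (induction t arbitrary: v)
  case 0 then show ?case using assms by (simp add: Alg_def)
next
  case (Suc t)
  have IH: "\<And>u. exec G Alg a t u = to_nat (ps, tg, t, W G t u (deg G u))" using Suc by simp
  have m: "a_send Alg (exec G Alg a t (nbr G v q)) (rport G v q) = to_nat (W G t (nbr G v q) (rport G v q))" for q
    using IH by (simp add: Alg_def restr_W)
  have nf: "\<not> ps \<le> t" using Suc.prems by simp
  show ?case
    using nf by (simp only: exec.simps IH m) (simp add: Alg_def trdeg_W trr_W W_Suc_N restr_W)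
qed

lemma Alg_frozen:
  assumes "dec_adv a = (ps, tg)"
  shows "ps \<le> t \<Longrightarrow> exec G Alg a t v = exec G Alg a ps v"
proof (induction t arbitrary: v)
  case 0 then show ?case by simp
next
  case (Suc t)
  show ?case
  proof (cases "ps = Suc t")
    case True then show ?thesis by simp
  next
    case False
    then have le: "ps \<le> t" using Suc.prems by simp
    have e: "exec G Alg a t v = to_nat (ps, tg, ps, W G ps v (deg G v))"
      using Suc.IH[OF le] Alg_run[OF assms, of ps] by simp
    show ?thesis using e Suc.IH[OF le] by (simp add: Alg_def)
  qed
qed

lemma Alg_out:
  assumes "dec_adv a = (ps, tg)"
  shows "a_out Alg (exec G Alg a t v) = (if ps \<le> t then Some (W G ps v (deg G v) = tg) else None)"
proof (cases "ps \<le> t")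
  case True
  then show ?thesis using Alg_frozen[OF assms True] Alg_run[OF assms, of ps] by (simp add: Alg_def)
next
  case False
  then show ?thesis using Alg_run[OF assms, of t] by (simp add: Alg_def)
qed


lemma maxdeg_ge: "wf_pgraph G \<Longrightarrow> v < nv G \<Longrightarrow> deg G v \<le> maxdeg G"
  unfolding maxdeg_def by (rule Max_ge) auto

lemma len_filter_ne: "r < d \<Longrightarrow> length (filter (\<lambda>q. q \<noteq> r) [0..<d]) \<le> d - 1"
proof -
  assume "r < d"
  then have "length (filter (\<lambda>q. q \<noteq> r) [0..<d]) < length [0..<d]"
    by (intro length_filter_less[of r]) auto
  then show ?thesis by simp
qed

lemma W_in_Wset:
  assumes wf: "wf_pgraph G" and D: "\<forall>v < nv G. deg G v \<le> D"
  shows "u < nv G \<Longrightarrow> r < deg G u \<Longrightarrow> W G t u r \<in> Wset D t"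
proof (induction t arbitrary: u r)
  case 0
  then have "(deg G u, r) \<in> {..D} \<times> {..D}" using D by auto
  then show ?case by force
next
  case (Suc t)
  let ?l = "map (\<lambda>q. (rport G u q, W G t (nbr G u q) (rport G u q))) (filter (\<lambda>q. q \<noteq> r) [0..<deg G u])"
  have "set ?l \<subseteq> {..<D} \<times> Wset D t"
  proof
    fix x assume "x \<in> set ?l"
    then obtain q where q: "q < deg G u" "x = (rport G u q, W G t (nbr G u q) (rport G u q))" by auto
    note R = rport_props[OF wf Suc.prems(1) q(1)]
    have w: "nbr G u q < nv G" using wfD2[OF wf Suc.prems(1) q(1)] by simp
    have "rport G u q < D" using R w D by (meson less_le_trans)
    moreover have "W G t (nbr G u q) (rport G u q) \<in> Wset D t" using Suc.IH[OF w] R by blast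
    ultimately show "x \<in> {..<D} \<times> Wset D t" using q by simp
  qed
  moreover have "length ?l \<le> D - 1" using len_filter_ne[OF Suc.prems(2)] D Suc.prems(1) by fastforce
  moreover have "deg G u \<le> D" "r \<le> D" using D Suc.prems by auto
  ultimately have "((deg G u, r), ?l) \<in> ({..D} \<times> {..D}) \<times> {l. set l \<subseteq> {..<D} \<times> Wset D t \<and> length l \<le> D - 1}"
    by simp
  then show ?case by (simp only: W.simps Wset.simps) (rule image_eqI[rotated], assumption, simp)
qed

lemma N_in_Nset:
  assumes wf: "wf_pgraph G" and D: "\<forall>v < nv G. deg G v \<le> D" and v: "v < nv G"
  shows "W G t v (deg G v) \<in> Nset D t"
proof (cases t)
  case 0
  then show ?thesis using D v by force
next
  case (Suc s)
  let ?l = "map (\<lambda>q. (rport G v q, W G s (nbr G v q) (rport G v q))) [0..<deg G v]"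
  have "set ?l \<subseteq> {..<D} \<times> Wset D s"
  proof
    fix x assume "x \<in> set ?l"
    then obtain q where q: "q < deg G v" "x = (rport G v q, W G s (nbr G v q) (rport G v q))" by auto
    note R = rport_props[OF wf v q(1)]
    have w: "nbr G v q < nv G" using wfD2[OF wf v q(1)] by simp
    have "rport G v q < D" using R w D by (meson less_le_trans)
    moreover have "W G s (nbr G v q) (rport G v q) \<in> Wset D s" using W_in_Wset[OF wf D w] R by blast
    ultimately show "x \<in> {..<D} \<times> Wset D s" using q by simp
  qed
  moreover have "length ?l \<le> D" using D v by simp
  moreover have "deg G v \<le> D" using D v by auto
  ultimately have "((deg G v, deg G v), ?l) \<in> ({..D} \<times> {..D}) \<times> {l. set l \<subseteq> {..<D} \<times> Wset D s \<and> length l \<le> D}"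
    by simp
  then show ?thesis unfolding Suc by (simp only: W_Suc_N Nset.simps) (rule image_eqI[rotated], assumption, simp)
qed


lemma Tr0_in_Wset: "Tr 0 0 [] \<in> Wset D t"
proof (cases t)
  case 0 then show ?thesis by force
next
  case (Suc s)
  have "((0, 0), []) \<in> ({..D} \<times> {..D}) \<times> {l. set l \<subseteq> {..<D} \<times> Wset D s \<and> length l \<le> D - 1}" by simp
  then show ?thesis unfolding Suc Wset.simps by (rule image_eqI[rotated]) simp
qed

lemma finite_Wset: "finite (Wset D t)"
  by (induction t) (auto intro!: finite_lists_length_le)

lemma finite_Nset: "finite (Nset D t)"
  by (cases t) (auto intro!: finite_lists_length_le finite_imageI finite_cartesian_product simp: finite_Wset)

lemma sum_pow_le: "(1::nat) \<le> b \<Longrightarrow> (\<Sum>i\<le>n. b ^ i) \<le> (n + 1) * b ^ n"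
proof -
  assume b: "1 \<le> b"
  have "(\<Sum>i\<le>n. b ^ i) \<le> (\<Sum>i\<le>n. b ^ n)"
    by (rule sum_mono) (use b in \<open>auto intro: power_increasing\<close>)
  then show ?thesis by simp
qed

lemma card_lists_bound:
  assumes "finite B" "1 \<le> card B"
  shows "card {l. set l \<subseteq> B \<and> length l \<le> n} \<le> (n + 1) * card B ^ n"
  using card_lists_length_le[OF assms(1), of n] sum_pow_le[OF assms(2), of n] by simp

lemma card_layer:
  assumes "finite B" "1 \<le> card B"
  shows "card ((\<lambda>((d, r), l). Tr d r l) ` (({..D} \<times> {..D}) \<times> {l. set l \<subseteq> B \<and> length l \<le> n}))
     \<le> (D + 1) * (D + 1) * ((n + 1) * card B ^ n)"
proof -
  have "card ((\<lambda>((d, r), l). Tr d r l) ` (({..D} \<times> {..D}) \<times> {l. set l \<subseteq> B \<and> length l \<le> n}))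
     \<le> card (({..D} \<times> {..D}) \<times> {l. set l \<subseteq> B \<and> length l \<le> n})" by (rule card_image_le) (simp add: finite_lists_length_le assms)
  also have "\<dots> = (D + 1) * (D + 1) * card {l. set l \<subseteq> B \<and> length l \<le> n}"
    by (simp add: card_cartesian_product)
  also have "\<dots> \<le> (D + 1) * (D + 1) * ((n + 1) * card B ^ n)"
    using card_lists_bound[OF assms] by (rule mult_le_mono2)
  finally show ?thesis .
qed

lemma card_Wset_pos: "1 \<le> card (Wset D t)"
  using Tr0_in_Wset[of D t] finite_Wset[of D t] by (metis One_nat_def Suc_leI card_gt_0_iff empty_iff)

lemma exp_step:
  fixes D k :: nat
  assumes "3 \<le> D" "1 \<le> k"
  shows "D + 4 + (11 * k - 7) * (D - 1) \<le> 11 * (k * (D - 1)) - 7"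
proof -
  define m where "m = D - 1"
  have m2: "2 \<le> m" and Dm: "D = m + 1" using assms(1) unfolding m_def by auto
  have km: "m \<le> k * m" using assms(2) by simp
  have "(11 * k - 7) * m = 11 * (k * m) - 7 * m" by (simp add: diff_mult_distrib)
  moreover have "D - 1 = m" unfolding m_def ..
  ultimately show ?thesis using m2 km Dm by simp
qed

lemma card_Wset:
  assumes D: "3 \<le> D"
  shows "card (Wset D t) \<le> D ^ (11 * (D - 1) ^ t - 7)"
proof (induction t)
  case 0
  have "card (Wset D 0) \<le> card ({..D} \<times> {..D})" unfolding Wset.simps by (rule card_image_le) simp
  also have "\<dots> = (D + 1) * (D + 1)" by (simp add: card_cartesian_product)
  also have "\<dots> \<le> D ^ 4"
  proof -
    have "3 * D \<le> D * D" using mult_le_mono1[OF D] .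
    then have "D + 1 \<le> D * D" using D by linarith
    then have "(D + 1) * (D + 1) \<le> (D * D) * (D * D)" using mult_le_mono by blast
    then show ?thesis by (simp add: power4_eq_xxxx mult.assoc)
  qed
  finally show ?case by simp
next
  case (Suc t)
  let ?B = "{..<D} \<times> Wset D t"
  let ?w = "card (Wset D t)"
  define k where "k = (D - 1) ^ t"
  have k1: "1 \<le> k" unfolding k_def using D by simp
  have fB: "finite ?B" by (simp add: finite_Wset)
  have cB: "card ?B = D * ?w" by (simp add: card_cartesian_product)
  have cB1: "1 \<le> card ?B" unfolding cB using D card_Wset_pos[of D t] by simp
  have "3 * D \<le> D * D" using mult_le_mono1[OF D] .
  then have D1: "D + 1 \<le> D * D" using D by linarith
  have "card (Wset D (Suc t)) \<le> (D + 1) * (D + 1) * ((D - 1 + 1) * card ?B ^ (D - 1))"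
    unfolding Wset.simps by (rule card_layer[OF fB cB1])
  also have "\<dots> \<le> (D * D) * (D * D) * (D * (D * D ^ (11 * k - 7)) ^ (D - 1))"
  proof -
    have "card ?B \<le> D * D ^ (11 * k - 7)" unfolding cB k_def using Suc.IH by simp
    then have "card ?B ^ (D - 1) \<le> (D * D ^ (11 * k - 7)) ^ (D - 1)" by (rule power_mono) simp
    moreover have "D - 1 + 1 = D" using D by simp
    ultimately show ?thesis using D1 by (metis mult_le_mono order_refl)
  qed
  also have "\<dots> = D ^ (D + 4 + (11 * k - 7) * (D - 1))"
  proof -
    define e where "e = 11 * k - 7"
    define m where "m = D - 1"
    have Dm: "D = Suc m" using D unfolding m_def by simp
    have a: "D * D ^ e = D ^ Suc e" by simp
    have b: "(D ^ Suc e) ^ m = D ^ (Suc e * m)" by (rule power_mult[symmetric])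
    have c: "D * D ^ (Suc e * m) = D ^ Suc (Suc e * m)" by simp
    have d: "(D * D) * (D * D) = D ^ 4" by (simp add: power4_eq_xxxx)
    have "(D * D) * (D * D) * (D * (D * D ^ e) ^ m) = D ^ (4 + Suc (Suc e * m))"
      unfolding a b c d by (simp only: power_add)
    moreover have "4 + Suc (Suc e * m) = D + 4 + e * m" unfolding Dm by simp
    ultimately show ?thesis unfolding e_def[symmetric] m_def[symmetric] by (simp only:)
  qed
  also have "\<dots> \<le> D ^ (11 * (k * (D - 1)) - 7)"
    by (rule power_increasing[OF exp_step[OF D k1]]) (use D in simp)
  finally show ?case unfolding k_def by (simp add: mult.commute)
qed


lemma exp_stepN:
  fixes D k :: nat
  assumes "3 \<le> D" "1 \<le> k"
  shows "6 + Suc (11 * k - 7) * D \<le> 22 * (k * (D - 1))"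
proof -
  define m where "m = D - 1"
  have m2: "2 \<le> m" and Dm: "D = m + 1" using assms(1) unfolding m_def by auto
  have km: "m \<le> k * m" using assms(2) by simp
  obtain j where kj: "k = Suc j" using assms(2) by (cases k) auto
  have h: "Suc (11 * k - 7) * D + 6 * m + 6 = 11 * (k * m) + 11 * k"
    unfolding kj Dm by (simp add: algebra_simps)
  moreover have "k \<le> k * m" using m2 by simp
  ultimately have "6 + Suc (11 * k - 7) * D \<le> 22 * (k * m)" using m2 by linarith
  moreover have "D - 1 = m" unfolding m_def ..
  ultimately show ?thesis by simp
qed

lemma card_Nset:
  assumes D: "3 \<le> D"
  shows "card (Nset D t) \<le> D ^ (22 * (D - 1) ^ t)"
proof (cases t)
  case 0
  have "card (Nset D t) \<le> D ^ (11 * (D - 1) ^ 0 - 7)" using card_Wset[OF D, of 0] 0 by simp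
  also have "\<dots> \<le> D ^ (22 * (D - 1) ^ t)" using D 0 by (intro power_increasing) simp_all
  finally show ?thesis .
next
  case (Suc s)
  let ?B = "{..<D} \<times> Wset D s"
  define k where "k = (D - 1) ^ s"
  define e where "e = 11 * k - 7"
  have k1: "1 \<le> k" unfolding k_def using D by simp
  have fB: "finite ?B" by (simp add: finite_Wset)
  have cB: "card ?B = D * card (Wset D s)" by (simp add: card_cartesian_product)
  have cB1: "1 \<le> card ?B" unfolding cB using D card_Wset_pos[of D s] by simp
  have "3 * D \<le> D * D" using mult_le_mono1[OF D] .
  then have D1: "D + 1 \<le> D * D" using D by linarith
  have "card (Nset D t) \<le> (D + 1) * (D + 1) * ((D + 1) * card ?B ^ D)"
    unfolding Suc Nset.simps by (rule card_layer[OF fB cB1])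
  also have "\<dots> \<le> (D * D) * (D * D) * ((D * D) * (D * D ^ e) ^ D)"
  proof -
    have "card ?B \<le> D * D ^ e" unfolding cB e_def k_def using card_Wset[OF D, of s] by simp
    then have "card ?B ^ D \<le> (D * D ^ e) ^ D" by (rule power_mono) simp
    then show ?thesis using D1 by (metis mult_le_mono)
  qed
  also have "\<dots> = D ^ (6 + Suc e * D)"
  proof -
    have a: "D * D ^ e = D ^ Suc e" by simp
    have b: "(D ^ Suc e) ^ D = D ^ (Suc e * D)" by (rule power_mult[symmetric])
    have d: "(D * D) * (D * D) = D ^ 4" by (simp add: power4_eq_xxxx)
    have d2: "D * D = D ^ 2" by (simp add: power2_eq_square)
    show ?thesis unfolding a b d d2 by (simp only: power_add[symmetric]) simp
  qed
  also have "\<dots> \<le> D ^ (22 * (D - 1) ^ t)"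
  proof (rule power_increasing)
    show "6 + Suc e * D \<le> 22 * (D - 1) ^ t"
      using exp_stepN[OF D k1] unfolding e_def Suc k_def by (simp add: mult.commute)
  qed (use D in simp)
  finally show ?thesis .
qed


lemma bits_len_le: "n < 2 ^ k \<Longrightarrow> length (bits n) \<le> k"
proof (induction n arbitrary: k rule: bits.induct)
  case (1 n)
  show ?case
  proof (cases "n = 0")
    case True then show ?thesis by simp
  next
    case False
    then have k0: "k \<noteq> 0" using 1(2) by (cases k) auto
    then obtain k' where k': "k = Suc k'" by (cases k) auto
    have "n div 2 < 2 ^ k'" using 1(2) k' by simp
    then have "length (bits (n div 2)) \<le> k'" using 1(1) False by blast
    then show ?thesis using False k' by simp
  qed
qed

lemma bits_len_gt: "n < 2 ^ length (bits n)"
proof (induction n rule: bits.induct)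
  case (1 n)
  show ?case
  proof (cases "n = 0")
    case True then show ?thesis by simp
  next
    case False
    then have "n div 2 < 2 ^ length (bits (n div 2))" using 1 by blast
    then show ?thesis using False by simp
  qed
qed

lemma bits_len_pow: "0 < n \<Longrightarrow> 2 ^ (length (bits n) - 1) \<le> n"
proof (induction n rule: bits.induct)
  case (1 n)
  show ?case
  proof (cases "n div 2 = 0")
    case True
    then have "n = 1" using 1(2) by simp
    then show ?thesis by simp
  next
    case False
    then have ih: "2 ^ (length (bits (n div 2)) - 1) \<le> n div 2" using 1 by simp
    have ln: "length (bits n) - 1 = length (bits (n div 2))" using 1(2) by simp
    have "length (bits (n div 2)) \<noteq> 0" using False by simp
    then obtain l where l: "length (bits (n div 2)) = Suc l" by (cases "length (bits (n div 2))") auto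
    have "2 ^ (length (bits n) - 1) = 2 * 2 ^ (length (bits (n div 2)) - 1)"
      unfolding ln l by simp
    also have "\<dots> \<le> 2 * (n div 2)" using ih by simp
    also have "\<dots> \<le> n" by simp
    finally show ?thesis .
  qed
qed

lemma prod_encode_bound:
  assumes "a < 2 ^ k" "b < 2 ^ k"
  shows "prod_encode (a, b) < 2 ^ (2 * k + 2)"
proof -
  define s where "s = a + b"
  have "triangle s \<le> s * Suc s" unfolding triangle_def by simp
  then have "prod_encode (a, b) \<le> s * Suc s + s" unfolding prod_encode_def s_def by simp
  also have "\<dots> < Suc s * Suc s" by simp
  also have "\<dots> \<le> 2 ^ (k + 1) * 2 ^ (k + 1)"
  proof -
    have "Suc s \<le> 2 ^ (k + 1)" using assms unfolding s_def by simp
    then show ?thesis by (rule mult_le_mono) (use \<open>Suc s \<le> 2 ^ (k + 1)\<close> in simp)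
  qed
  also have "\<dots> = 2 ^ (2 * k + 2)" by (simp add: power_add[symmetric])
  finally show ?thesis .
qed

lemma leader_exists:
  assumes wf: "wf_pgraph G" and ss: "sel_solvable G T"
  shows "\<exists>v0 < nv G. \<forall>v < nv G. W G T v (deg G v) = W G T v0 (deg G v0) \<longrightarrow> v = v0"
proof -
  obtain B where B: "solves_sel_in G B [] T" using ss unfolding sel_solvable_def by blast
  then obtain v0 where v0: "v0 < nv G" "a_out B (exec G B [] T v0) = Some True"
    and un: "\<And>v. v < nv G \<Longrightarrow> a_out B (exec G B [] T v) = Some True \<Longrightarrow> v = v0"
    unfolding solves_sel_in_def by blast
  have "\<forall>v < nv G. W G T v (deg G v) = W G T v0 (deg G v0) \<longrightarrow> v = v0"
  proof (intro allI impI)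
    fix v assume v: "v < nv G" and e: "W G T v (deg G v) = W G T v0 (deg G v0)"
    have "exec G B [] T v = exec G B [] T v0" using exec_det[OF wf v v0(1) e] .
    then show "v = v0" using un[OF v] v0(2) by simp
  qed
  then show ?thesis using v0(1) by blast
qed

lemma exec_fix_adv:
  "exec G (A\<lparr>a_init := (\<lambda>_ d. a_init A a d)\<rparr>) [] t v = exec G A a t v"
proof (induction t arbitrary: v)
  case 0 show ?case by simp
next
  case (Suc t)
  have s: "a_send (A\<lparr>a_init := (\<lambda>_ d. a_init A a d)\<rparr>) = a_send A" by (cases A) simp
  have u: "a_upd (A\<lparr>a_init := (\<lambda>_ d. a_init A a d)\<rparr>) = a_upd A" by (cases A) simp
  show ?case by (simp only: exec.simps s u Suc.IH)
qed

lemma adv_to_ded: "solves_sel_in G A a T \<Longrightarrow> sel_solvable G T"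
  unfolding sel_solvable_def
  by (rule exI[of _ "A\<lparr>a_init := (\<lambda>_ d. a_init A a d)\<rparr>"])
     (simp add: solves_sel_in_def exec_fix_adv)


definition Nv :: "pgraph \<Rightarrow> nat \<Rightarrow> tr" where
  "Nv G v = W G (sel_index G) v (deg G v)"

definition ldr :: "pgraph \<Rightarrow> nat" where
  "ldr G = (SOME v0. v0 < nv G \<and> (\<forall>v < nv G. Nv G v = Nv G v0 \<longrightarrow> v = v0))"

definition idx :: "pgraph \<Rightarrow> nat" where
  "idx G = inv_into {0..<card (Nset (maxdeg G) (sel_index G))} (enumN (maxdeg G) (sel_index G)) (Nv G (ldr G))"

definition orc :: "pgraph \<Rightarrow> bool list" where
  "orc G = bits (prod_encode (maxdeg G, prod_encode (sel_index G, idx G)))"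

lemma good_G:
  assumes wf: "wf_pgraph G" and ex: "\<exists>T. sel_solvable G T"
  shows "sel_solvable G (sel_index G)"
    and "ldr G < nv G" "\<forall>v < nv G. Nv G v = Nv G (ldr G) \<longrightarrow> v = ldr G"
    and "idx G < card (Nset (maxdeg G) (sel_index G))"
    and "dec_adv (orc G) = (sel_index G, Nv G (ldr G))"
proof -
  show ss: "sel_solvable G (sel_index G)" unfolding sel_index_def using ex by (rule LeastI_ex)
  have "\<exists>v0. v0 < nv G \<and> (\<forall>v < nv G. Nv G v = Nv G v0 \<longrightarrow> v = v0)"
    using leader_exists[OF wf ss] unfolding Nv_def by blast
  then have L: "ldr G < nv G \<and> (\<forall>v < nv G. Nv G v = Nv G (ldr G) \<longrightarrow> v = ldr G)"
    unfolding ldr_def by (rule someI_ex)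
  then show "ldr G < nv G" "\<forall>v < nv G. Nv G v = Nv G (ldr G) \<longrightarrow> v = ldr G" by simp_all
  let ?D = "maxdeg G" and ?ps = "sel_index G"
  have "\<exists>h. bij_betw h {0..<card (Nset ?D ?ps)} (Nset ?D ?ps)"
    by (rule ex_bij_betw_nat_finite) (rule finite_Nset)
  then have bij: "bij_betw (enumN ?D ?ps) {0..<card (Nset ?D ?ps)} (Nset ?D ?ps)"
    unfolding enumN_def by (rule someI_ex)
  have mem: "Nv G (ldr G) \<in> Nset ?D ?ps"
    unfolding Nv_def using N_in_Nset[OF wf _ ] maxdeg_ge[OF wf] L by blast
  have "idx G \<in> {0..<card (Nset ?D ?ps)}" unfolding idx_def
    using bij mem by (metis bij_betw_def inv_into_into)
  then show "idx G < card (Nset ?D ?ps)" by simp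
  have e: "enumN ?D ?ps (idx G) = Nv G (ldr G)" unfolding idx_def
    using bij mem by (rule bij_betw_inv_into_right)
  show "dec_adv (orc G) = (?ps, Nv G (ldr G))"
    unfolding dec_adv_def orc_def nob_bits using e by simp
qed

lemma part1:
  assumes wf: "wf_pgraph G" and ex: "\<exists>T. sel_solvable G T"
  shows "solves_sel_in G Alg (orc G) (sel_index G)"
proof -
  note g = good_G[OF wf ex]
  note out = Alg_out[OF g(5)]
  have "\<exists>!v. v < nv G \<and> a_out Alg (exec G Alg (orc G) (sel_index G) v) = Some True"
  proof (rule ex1I[of _ "ldr G"])
    show "ldr G < nv G \<and> a_out Alg (exec G Alg (orc G) (sel_index G) (ldr G)) = Some True"
      using g(2) out by (simp add: Nv_def)
    fix v assume "v < nv G \<and> a_out Alg (exec G Alg (orc G) (sel_index G) v) = Some True"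
    then show "v = ldr G" using g(3) out by (simp add: Nv_def)
  qed
  then show ?thesis unfolding solves_sel_in_def using out by simp
qed

lemma part1b:
  assumes "T < sel_index G"
  shows "\<not> solves_sel_in G A a T"
proof
  assume "solves_sel_in G A a T"
  then have "sel_solvable G T" by (rule adv_to_ded)
  then have "sel_index G \<le> T" unfolding sel_index_def by (rule Least_le)
  then show False using assms by simp
qed


lemma L_log:
  assumes "2 \<le> D"
  shows "real (length (bits D)) \<le> 2 * log 2 (real D)"
proof -
  let ?L = "length (bits D)"
  have p: "2 ^ (?L - 1) \<le> D" using bits_len_pow[of D] assms by simp
  have L1: "1 \<le> ?L" using bits_len_gt[of D] assms by (cases ?L) auto
  have "(2::real) ^ (?L - 1) \<le> real D" using p by (metis of_nat_le_iff of_nat_numeral of_nat_power)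
  then have "log 2 ((2::real) ^ (?L - 1)) \<le> log 2 (real D)"
    using assms by (subst log_le_cancel_iff) auto
  then have a: "real (?L - 1) \<le> log 2 (real D)" by (simp add: log_nat_power)
  have "log 2 (2::real) \<le> log 2 (real D)" using assms by (subst log_le_cancel_iff) auto
  then have b: "1 \<le> log 2 (real D)" by simp
  have "real ?L = real (?L - 1) + 1" using L1 by simp
  then show ?thesis using a b by linarith
qed

lemma part2:
  assumes wf: "wf_pgraph G" and ex: "\<exists>T. sel_solvable G T" and D3: "3 \<le> maxdeg G"
  shows "real (length (orc G)) \<le> 440 * (real (maxdeg G) - 1) ^ sel_index G * log 2 (real (maxdeg G))"
proof -
  note g = good_G[OF wf ex]
  define D where "D = maxdeg G"
  define ps where "ps = sel_index G"
  define i where "i = idx G"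
  define L where "L = length (bits D)"
  define K where "K = 22 * (D - 1) ^ ps"
  have D: "3 \<le> D" using D3 unfolding D_def .
  have iK: "i < D ^ K" using g(4) card_Nset[OF D, of ps] unfolding i_def K_def D_def ps_def by simp
  have DL: "D < 2 ^ L" unfolding L_def by (rule bits_len_gt)
  have L1: "1 \<le> L" using DL D by (cases L) auto
  have K1: "1 \<le> K" unfolding K_def using D by simp
  have "D ^ K \<le> (2 ^ L) ^ K" using DL by (intro power_mono) simp_all
  also have "\<dots> = 2 ^ (L * K)" by (simp add: power_mult)
  finally have i2: "i < 2 ^ (L * K)" using iK by simp
  have "ps < 2 ^ ps" by (rule less_exp)
  also have "\<dots> \<le> (D - 1) ^ ps" using D by (intro power_mono) simp_all
  also have "\<dots> \<le> K" unfolding K_def by simp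
  also have "\<dots> \<le> L * K" using L1 by simp
  finally have "ps < L * K" .
  then have ps2: "ps < 2 ^ (L * K)" using less_exp[of "L * K"] by (meson less_trans)
  have "L \<le> L * K" using K1 by simp
  then have "(2::nat) ^ L \<le> 2 ^ (L * K)" by (rule power_increasing) simp
  then have D2: "D < 2 ^ (L * K)" using DL by (rule less_le_trans[rotated])
  have inner: "prod_encode (ps, i) < 2 ^ (2 * (L * K) + 2)" by (rule prod_encode_bound[OF ps2 i2])
  have "(2::nat) ^ (L * K) \<le> 2 ^ (2 * (L * K) + 2)" by (rule power_increasing) simp_all
  then have "D < 2 ^ (2 * (L * K) + 2)" using D2 by (rule less_le_trans[rotated])
  then have "prod_encode (D, prod_encode (ps, i)) < 2 ^ (2 * (2 * (L * K) + 2) + 2)"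
    by (rule prod_encode_bound[OF _ inner])
  then have "length (orc G) \<le> 2 * (2 * (L * K) + 2) + 2"
    unfolding orc_def D_def ps_def i_def by (rule bits_len_le)
  also have "\<dots> \<le> 10 * (L * K)"
  proof -
    have "1 * 1 \<le> L * K" using L1 K1 by (rule mult_le_mono)
    then have x: "1 \<le> L * K" by simp
    have "\<And>x::nat. 1 \<le> x \<Longrightarrow> 2 * (2 * x + 2) + 2 \<le> 10 * x" by simp
    then show ?thesis using x by blast
  qed
  finally have len: "real (length (orc G)) \<le> 10 * real L * real K" by (simp add: mult.assoc flip: of_nat_mult)
  have LL: "real L \<le> 2 * log 2 (real D)" unfolding L_def using D by (intro L_log) simp
  have RK: "real K = 22 * (real D - 1) ^ ps" unfolding K_def using D by (simp add: of_nat_diff)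
  have pos: "0 \<le> real K" by simp
  have "10 * real L * real K \<le> 10 * (2 * log 2 (real D)) * real K"
    using LL pos by (intro mult_right_mono mult_left_mono) simp_all
  also have "\<dots> = 440 * (real D - 1) ^ ps * log 2 (real D)" unfolding RK by simp
  finally have fin: "10 * real L * real K \<le> 440 * (real D - 1) ^ ps * log 2 (real D)" .
  show ?thesis using order_trans[OF len fin] unfolding D_def ps_def .
qed

theorem mainTheorem3:
  shows "\<exists>(orc :: pgraph \<Rightarrow> bool list) (A :: alg).
     (\<forall>G. wf_pgraph G \<and> (\<exists>T. sel_solvable G T) \<longrightarrow>
        solves_sel_in G A (orc G) (sel_index G)
        \<and> (\<forall>T < sel_index G. \<not> solves_sel_in G A (orc G) T))
   \<and> (\<exists>c :: real. \<forall>G. wf_pgraph G \<and> (\<exists>T. sel_solvable G T) \<and> maxdeg G \<ge> 3 \<longrightarrow>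
        real (length (orc G)) \<le> c * (real (maxdeg G) - 1) ^ sel_index G * log 2 (real (maxdeg G)))"
proof (intro exI conjI allI impI)
  fix G assume "wf_pgraph G \<and> (\<exists>T. sel_solvable G T)"
  then show "solves_sel_in G Alg (orc G) (sel_index G)" using part1 by blast
next
  fix G T assume "T < sel_index G"
  then show "\<not> solves_sel_in G Alg (orc G) T" by (rule part1b)
next
  fix G assume "wf_pgraph G \<and> (\<exists>T. sel_solvable G T) \<and> maxdeg G \<ge> 3"
  then show "real (length (orc G)) \<le> 440 * (real (maxdeg G) - 1) ^ sel_index G * log 2 (real (maxdeg G))"
    using part2 by blast
qed

end
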